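(* Let $\mathbf{d}$ be a finite sequence of nonnegative integers. Suppose that $$4\bigl(f(\mathbf{d})-1\bigr)B(\mathbf{d}) = \sum_{\mathbf{s}+\mathbf{t}=\mathbf{d}} v(\mathbf{s})v(\mathbf{t})B(\mathbf{s})B(\mathbf{t}) \quad\text{and}\quad \binom{f(\mathbf{d})-1}{2}B(\mathbf{d}) = \sum_{\mathbf{s}+\mathbf{t}=\mathbf{d}} \bigl(f(\mathbf{s})-1\bigr)\binom{v(\mathbf{t})}{2}B(\mathbf{s})B(\mathbf{t}).$$ Then $$\left((f(\mathbf{d})-1)\,v(\mathbf{d}) + \binom{f(\mathbf{d})-1}{2}\right)B(\mathbf{d}) = \sum_{\mathbf{s}+\mathbf{t}=\mathbf{d}} \bigl(v(\mathbf{s})+f(\mathbf{s})-1\bigr)\binom{v(\mathbf{t})}{2}B(\mathbf{s})B(\mathbf{t}),$$ equivalently $$\left(\binom{n(\mathbf{d})+1}{2}-\binom{v(\mathbf{d})}{2}\right)B(\mathbf{d}) = \sum_{\mathbf{s}+\mathbf{t}=\mathbf{d}} \bigl(1+n(\mathbf{s})\bigr)\binom{v(\mathbf{t})}{2}B(\mathbf{s})B(\mathbf{t}).$$ All sums run over ordered pairs $(\mathbf{s},\mathbf{t})$ of finite sequences of nonnegative integers with $\mathbf{s}+\mathbf{t}=\mathbf{d}$ componentwise.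
   Context: Maps are rooted planar maps (embeddings of finite connected multigraphs in the sphere up to orientation-preserving homeomorphism, with a distinguished half-edge). A map is bipartite if all its cycles have even length. For a finite sequence $\mathbf{d}=(d_1,d_2,\ldots)$ of nonnegative integers, $B(\mathbf{d})$ is the number of rooted planar bipartite maps with exactly $d_i$ faces of degree $2i$ for each $i$, with convention $B(\mathbf{0})=0$. Set $f(\mathbf{d})=\sum_i d_i$, $n(\mathbf{d})=\sum_i i\,d_i$, $v(\mathbf{d})=n(\mathbf{d})+2-f(\mathbf{d})$. *)

theory Defs
  imports Complex_Main "HOL-Combinatorics.Permutations"
begin

text \<open>A labelled map with m edges is a pair (sigma, alpha) of
permutations of the half-edges {..<2m}: sigma gives the cyclic order of half-edges around
vertices, alpha is a fixed-point-free involution pairing half-edges into edges, and the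
group generated by sigma and alpha acts transitively (connectedness). Faces are the cycles
of sigma o alpha. Rooted maps are labelled maps up to relabellings fixing the root
half-edge 0; orientation-preserving isomorphism classes of rooted maps correspond exactly
to such classes.\<close>

definition cyc :: "(nat \<Rightarrow> nat) \<Rightarrow> nat \<Rightarrow> nat set" where
  "cyc p x = {(p ^^ k) x | k. True}"

definition cycles_of :: "(nat \<Rightarrow> nat) \<Rightarrow> nat set \<Rightarrow> nat set set" where
  "cycles_of p S = cyc p ` S"

definition labelled_map :: "nat \<Rightarrow> (nat \<Rightarrow> nat) \<Rightarrow> (nat \<Rightarrow> nat) \<Rightarrow> bool" where
  "labelled_map m \<sigma> \<alpha> \<longleftrightarrow>
     \<sigma> permutes {..<2*m} \<and> \<alpha> permutes {..<2*m} \<and>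
     (\<forall>x<2*m. \<alpha> x \<noteq> x \<and> \<alpha> (\<alpha> x) = x) \<and>
     (\<forall>x<2*m. \<forall>y<2*m. (x, y) \<in> ({(z, \<sigma> z) | z. z < 2*m} \<union> {(z, \<alpha> z) | z. z < 2*m})\<^sup>*)"

definition planar_map :: "nat \<Rightarrow> (nat \<Rightarrow> nat) \<Rightarrow> (nat \<Rightarrow> nat) \<Rightarrow> bool" where
  "planar_map m \<sigma> \<alpha> \<longleftrightarrow>
     int (card (cycles_of \<sigma> {..<2*m})) - int m + int (card (cycles_of (\<sigma> \<circ> \<alpha>) {..<2*m})) = 2"

definition bipartite_map :: "nat \<Rightarrow> (nat \<Rightarrow> nat) \<Rightarrow> (nat \<Rightarrow> nat) \<Rightarrow> bool" where
  "bipartite_map m \<sigma> \<alpha> \<longleftrightarrow>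
     (\<exists>col :: nat \<Rightarrow> bool. \<forall>x<2*m. col (\<sigma> x) = col x \<and> col (\<alpha> x) \<noteq> col x)"

definition face_profile :: "nat \<Rightarrow> (nat \<Rightarrow> nat) \<Rightarrow> (nat \<Rightarrow> nat) \<Rightarrow> (nat \<Rightarrow> nat) \<Rightarrow> bool" where
  "face_profile m \<sigma> \<alpha> d \<longleftrightarrow>
     (\<forall>i\<ge>1. card {F \<in> cycles_of (\<sigma> \<circ> \<alpha>) {..<2*m}. card F = 2*i} = d i)"

text \<open>Sequences d = (d_1, d_2, ...) are functions nat => nat; index 0 is unused.\<close>
definition fcount :: "(nat \<Rightarrow> nat) \<Rightarrow> nat" where
  "fcount d = (\<Sum>i\<in>{i. i \<ge> 1 \<and> d i \<noteq> 0}. d i)"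

definition ncount :: "(nat \<Rightarrow> nat) \<Rightarrow> nat" where
  "ncount d = (\<Sum>i\<in>{i. i \<ge> 1 \<and> d i \<noteq> 0}. i * d i)"

definition vcount :: "(nat \<Rightarrow> nat) \<Rightarrow> int" where
  "vcount d = int (ncount d) + 2 - int (fcount d)"

definition good_map :: "(nat \<Rightarrow> nat) \<Rightarrow> (nat \<Rightarrow> nat) \<Rightarrow> (nat \<Rightarrow> nat) \<Rightarrow> bool" where
  "good_map d \<sigma> \<alpha> \<longleftrightarrow> (let m = ncount d in
     labelled_map m \<sigma> \<alpha> \<and> planar_map m \<sigma> \<alpha> \<and> bipartite_map m \<sigma> \<alpha> \<and> face_profile m \<sigma> \<alpha> d)"

definition rooted_class :: "nat \<Rightarrow> (nat \<Rightarrow> nat) \<Rightarrow> (nat \<Rightarrow> nat) \<Rightarrow> ((nat \<Rightarrow> nat) \<times> (nat \<Rightarrow> nat)) set" where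
  "rooted_class m \<sigma> \<alpha> = {(\<pi> \<circ> \<sigma> \<circ> inv \<pi>, \<pi> \<circ> \<alpha> \<circ> inv \<pi>) | \<pi>. \<pi> permutes {..<2*m} \<and> \<pi> 0 = 0}"

definition B :: "(nat \<Rightarrow> nat) \<Rightarrow> nat" where
  "B d = (if (\<forall>i\<ge>1. d i = 0) then 0
          else card {rooted_class (ncount d) \<sigma> \<alpha> | \<sigma> \<alpha>. good_map d \<sigma> \<alpha>})"

definition splits :: "(nat \<Rightarrow> nat) \<Rightarrow> ((nat \<Rightarrow> nat) \<times> (nat \<Rightarrow> nat)) set" where
  "splits d = {(s, t). \<forall>i. s i + t i = d i}"

end

theory Submission
  imports Defs
begin

lemma g2: "(x::rat) gchoose 2 = x * (x - 1) / 2"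
  by (simp add: numeral_2_eq_2 gbinomial_Suc atLeast0_atMost_Suc)

lemma cnt_split:
  fixes d s t :: "nat \<Rightarrow> nat"
  assumes fin: "finite {i. d i \<noteq> 0}" and st: "\<forall>i. s i + t i = d i"
  shows "fcount s + fcount t = fcount d" "ncount s + ncount t = ncount d"
proof -
  let ?S = "{i. i \<ge> 1 \<and> d i \<noteq> 0}"
  have fS: "finite ?S" using fin by (rule rev_finite_subset) auto
  have a: "(\<Sum>i\<in>{i. i \<ge> 1 \<and> u i \<noteq> 0}. c i * u i) = (\<Sum>i\<in>?S. c i * u i)"
    if "\<forall>i. u i \<le> d i" for u :: "nat \<Rightarrow> nat" and c :: "nat \<Rightarrow> nat"
  proof (rule sum.mono_neutral_left[OF fS])
    show "{i. i \<ge> 1 \<and> u i \<noteq> 0} \<subseteq> ?S" using that by (metis (mono_tags, lifting) Collect_mono le_zero_eq)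
  qed auto
  have us: "\<forall>i. s i \<le> d i" "\<forall>i. t i \<le> d i" using st by (metis le_add1 le_add2)+
  have d: "\<forall>i. d i \<le> d i" by simp
  have "fcount s + fcount t = (\<Sum>i\<in>?S. 1 * s i) + (\<Sum>i\<in>?S. 1 * t i)"
    unfolding fcount_def using a[OF us(1), of "\<lambda>_. 1"] a[OF us(2), of "\<lambda>_. 1"] by simp
  also have "\<dots> = (\<Sum>i\<in>?S. d i)" by (simp add: sum.distrib[symmetric] st)
  finally show "fcount s + fcount t = fcount d" unfolding fcount_def .
  have "ncount s + ncount t = (\<Sum>i\<in>?S. i * s i) + (\<Sum>i\<in>?S. i * t i)"
    unfolding ncount_def using a[OF us(1), of "\<lambda>i. i"] a[OF us(2), of "\<lambda>i. i"] by simp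
  also have "\<dots> = (\<Sum>i\<in>?S. i * d i)" by (simp add: sum.distrib[symmetric] st[rule_format, symmetric] algebra_simps)
  finally show "ncount s + ncount t = ncount d" unfolding ncount_def .
qed

theorem mainTheorem3:
  fixes d :: "nat \<Rightarrow> nat"
  assumes fin: "finite {i. d i \<noteq> 0}"
    and d0: "d 0 = 0"
    and h1: "4 * (of_nat (fcount d) - 1) * of_nat (B d)
             = (\<Sum>(s, t)\<in>splits d. of_int (vcount s) * of_int (vcount t) * of_nat (B s) * (of_nat (B t) :: rat))"
    and h2: "((of_nat (fcount d) - 1) gchoose 2) * of_nat (B d)
             = (\<Sum>(s, t)\<in>splits d. (of_nat (fcount s) - 1) * (of_int (vcount t) gchoose 2) * of_nat (B s) * (of_nat (B t) :: rat))"
  shows "(((of_nat (fcount d) - 1) * of_int (vcount d) + ((of_nat (fcount d) - 1) gchoose 2)) * of_nat (B d)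
           = (\<Sum>(s, t)\<in>splits d. (of_int (vcount s) + of_nat (fcount s) - 1) * (of_int (vcount t) gchoose 2) * of_nat (B s) * (of_nat (B t) :: rat)))
         \<and> ((((of_nat (ncount d) + 1) gchoose 2) - (of_int (vcount d) gchoose 2)) * of_nat (B d)
           = (\<Sum>(s, t)\<in>splits d. (1 + of_nat (ncount s)) * (of_int (vcount t) gchoose 2) * of_nat (B s) * (of_nat (B t) :: rat)))"
proof -
  define V :: "(nat \<Rightarrow> nat) \<Rightarrow> rat" where "V s = of_int (vcount s)" for s
  define F :: "(nat \<Rightarrow> nat) \<Rightarrow> rat" where "F s = of_nat (fcount s)" for s
  define N :: "(nat \<Rightarrow> nat) \<Rightarrow> rat" where "N s = of_nat (ncount s)" for s
  define b :: "(nat \<Rightarrow> nat) \<Rightarrow> rat" where "b s = of_nat (B s)" for s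
  have VN: "V s = N s + 2 - F s" for s unfolding V_def N_def F_def vcount_def by simp
  have add: "V s + V t = V d + 2" "F s + F t = F d" "N s + N t = N d" if "(s, t) \<in> splits d" for s t
  proof -
    have st: "\<forall>i. s i + t i = d i" using that by (simp add: splits_def)
    show f: "F s + F t = F d" unfolding F_def using cnt_split(1)[OF fin st] by (metis of_nat_add)
    show n: "N s + N t = N d" unfolding N_def using cnt_split(2)[OF fin st] by (metis of_nat_add)
    show "V s + V t = V d + 2" using f n VN by (simp add: VN algebra_simps)
  qed
  have swap: "(\<Sum>(s, t)\<in>splits d. g s t) = (\<Sum>(s, t)\<in>splits d. g t s)" for g :: "_ \<Rightarrow> _ \<Rightarrow> rat"
  proof -
    have bij: "bij_betw prod.swap (splits d) (splits d)"
      by (rule bij_betwI[where g=prod.swap]) (auto simp: splits_def add.commute)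
    show ?thesis using sum.reindex_bij_betw[OF bij, of "\<lambda>(s, t). g s t"]
      by (simp add: case_prod_unfold)
  qed
  let ?A = "\<Sum>(s, t)\<in>splits d. V s * (V t gchoose 2) * b s * b t"
  have "2 * ?A = ?A + (\<Sum>(s, t)\<in>splits d. V t * (V s gchoose 2) * b t * b s)"
    using swap[of "\<lambda>s t. V s * (V t gchoose 2) * b s * b t"] by simp
  also have "\<dots> = (\<Sum>(s, t)\<in>splits d. V s * (V t gchoose 2) * b s * b t + V t * (V s gchoose 2) * b t * b s)"
    by (simp add: sum.distrib[symmetric] case_prod_unfold)
  also have "\<dots> = (\<Sum>(s, t)\<in>splits d. (V d / 2) * (V s * V t * b s * b t))"
  proof (rule sum.cong[OF refl], clarify)
    fix s t assume "(s, t) \<in> splits d"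
    from add(1)[OF this] have e: "V d = V s + V t - 2" by simp
    show "V s * (V t gchoose 2) * b s * b t + V t * (V s gchoose 2) * b t * b s
       = V d / 2 * (V s * V t * b s * b t)"
      unfolding e g2 by (simp add: field_simps)
  qed
  also have "\<dots> = (V d / 2) * (\<Sum>(s, t)\<in>splits d. V s * V t * b s * b t)"
    by (simp add: sum_distrib_left case_prod_unfold)
  also have "\<dots> = (V d / 2) * (4 * (F d - 1) * b d)"
    using h1 by (simp add: V_def F_def b_def)
  finally have A: "?A = (F d - 1) * V d * b d" by (simp add: algebra_simps)
  have h2': "((F d - 1) gchoose 2) * b d = (\<Sum>(s, t)\<in>splits d. (F s - 1) * (V t gchoose 2) * b s * b t)"
    using h2 by (simp add: V_def F_def b_def)
  have c1: "((F d - 1) * V d + ((F d - 1) gchoose 2)) * b d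
      = (\<Sum>(s, t)\<in>splits d. (V s + F s - 1) * (V t gchoose 2) * b s * b t)"
  proof -
    have "(\<Sum>(s, t)\<in>splits d. (V s + F s - 1) * (V t gchoose 2) * b s * b t)
      = ?A + (\<Sum>(s, t)\<in>splits d. (F s - 1) * (V t gchoose 2) * b s * b t)"
      by (simp add: sum.distrib[symmetric] case_prod_unfold algebra_simps)
    then show ?thesis using A h2' by (simp add: algebra_simps)
  qed
  have c2: "(((N d + 1) gchoose 2) - (V d gchoose 2)) * b d
      = (\<Sum>(s, t)\<in>splits d. (1 + N s) * (V t gchoose 2) * b s * b t)"
  proof -
    have "((N d + 1) gchoose 2) - (V d gchoose 2) = (F d - 1) * V d + ((F d - 1) gchoose 2)"
      unfolding g2 VN[of d] by (simp add: field_simps)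
    moreover have "(\<Sum>(s, t)\<in>splits d. (1 + N s) * (V t gchoose 2) * b s * b t)
       = (\<Sum>(s, t)\<in>splits d. (V s + F s - 1) * (V t gchoose 2) * b s * b t)"
      by (rule sum.cong[OF refl]) (auto simp: VN)
    ultimately show ?thesis using c1 by simp
  qed
  show ?thesis using c1 c2 by (simp add: V_def F_def N_def b_def)
qed

end
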